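(* Let $\Gamma$ be a connected finite simple graph. Then $C_3(L(\Gamma))\cong\Gamma$ if and only if all of the following hold: (1) every vertex of $\Gamma$ has degree $2$ or $3$; (2) every vertex of degree $2$ in $\Gamma$ is contained in a triangle; (3) every triangle in $\Gamma$ contains exactly one vertex of degree $2$; (4) distinct triangles in $\Gamma$ share no vertices.
   Context: $L(\Gamma)$ is the line graph of $\Gamma$: its vertices are the edges of $\Gamma$, two being adjacent iff they share an endpoint. For a graph $H$, $C_3(H)$ is the graph whose vertices are the triangles (cliques of order $3$) of $H$, two distinct triangles being adjacent iff they share at least one vertex. *)

theory Defs
  imports Main
begin

definition simple_graph :: "'a set \<Rightarrow> 'a set set \<Rightarrow> bool" where
  "simple_graph V E \<longleftrightarrow> (\<forall>e\<in>E. e \<subseteq> V \<and> card e = 2)"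

definition fin_simple_graph :: "'a set \<Rightarrow> 'a set set \<Rightarrow> bool" where
  "fin_simple_graph V E \<longleftrightarrow> finite V \<and> simple_graph V E"

definition adj :: "'a set set \<Rightarrow> 'a \<Rightarrow> 'a \<Rightarrow> bool" where
  "adj E u v \<longleftrightarrow> {u, v} \<in> E"

definition connected_graph :: "'a set \<Rightarrow> 'a set set \<Rightarrow> bool" where
  "connected_graph V E \<longleftrightarrow> V \<noteq> {} \<and>
     (\<forall>u\<in>V. \<forall>v\<in>V. (u, v) \<in> {(x, y). x \<in> V \<and> y \<in> V \<and> adj E x y}\<^sup>*)"

definition degree :: "'a set set \<Rightarrow> 'a \<Rightarrow> nat" where
  "degree E v = card {e \<in> E. v \<in> e}"

definition triangles :: "'a set \<Rightarrow> 'a set set \<Rightarrow> 'a set set" where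
  "triangles V E = {t. t \<subseteq> V \<and> card t = 3 \<and> (\<forall>u\<in>t. \<forall>v\<in>t. u \<noteq> v \<longrightarrow> adj E u v)}"

definition line_graph_V :: "'a set \<Rightarrow> 'a set set \<Rightarrow> 'a set set" where
  "line_graph_V V E = E"

definition line_graph_E :: "'a set \<Rightarrow> 'a set set \<Rightarrow> 'a set set set" where
  "line_graph_E V E = {{e, f} | e f. e \<in> E \<and> f \<in> E \<and> e \<noteq> f \<and> e \<inter> f \<noteq> {}}"

definition C3_V :: "'a set \<Rightarrow> 'a set set \<Rightarrow> 'a set set" where
  "C3_V V E = triangles V E"

definition C3_E :: "'a set \<Rightarrow> 'a set set \<Rightarrow> 'a set set set" where
  "C3_E V E = {{s, t} | s t. s \<in> triangles V E \<and> t \<in> triangles V E \<and> s \<noteq> t \<and> s \<inter> t \<noteq> {}}"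

definition graph_iso :: "'a set \<Rightarrow> 'a set set \<Rightarrow> 'b set \<Rightarrow> 'b set set \<Rightarrow> bool" where
  "graph_iso V1 E1 V2 E2 \<longleftrightarrow> (\<exists>f. bij_betw f V1 V2 \<and>
     (\<forall>u\<in>V1. \<forall>v\<in>V1. {u, v} \<in> E1 \<longleftrightarrow> {f u, f v} \<in> E2))"

end

theory Submission
  imports Defs
begin

locale sg =
  fixes V :: "'a set" and E :: "'a set set"
  assumes fsg: "fin_simple_graph V E"
begin

definition Ev :: "'a \<Rightarrow> 'a set set" where "Ev v = {e\<in>E. v \<in> e}"
definition isstar :: "'a set set \<Rightarrow> bool" where "isstar X \<longleftrightarrow> (\<exists>v. \<forall>e\<in>X. v \<in> e)"
definition tedges :: "'a set \<Rightarrow> 'a set set" where "tedges T = {{a,b}|a b. a\<in>T \<and> b\<in>T \<and> a\<noteq>b}"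

abbreviation "LT \<equiv> triangles E (line_graph_E V E)"
abbreviation "CE \<equiv> C3_E E (line_graph_E V E)"
abbreviation "TG \<equiv> triangles V E"

lemma finV: "finite V" using fsg by (simp add: fin_simple_graph_def)
lemma edge_sub: "e \<in> E \<Longrightarrow> e \<subseteq> V" using fsg by (auto simp: fin_simple_graph_def simple_graph_def)
lemma edge_card: "e \<in> E \<Longrightarrow> card e = 2" using fsg by (auto simp: fin_simple_graph_def simple_graph_def)
lemma finE: "finite E"
proof -
  have "E \<subseteq> Pow V" using edge_sub by auto
  thus ?thesis using finV by (meson finite_Pow_iff finite_subset)
qed
lemma edge_obtain: assumes "e \<in> E" obtains a b where "a \<noteq> b" "e = {a,b}"
  using edge_card[OF assms] by (meson card_2_iff)
lemma two_pts: assumes "e \<in> E" "u \<in> e" "w \<in> e" "u \<noteq> w" shows "e = {u,w}"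
  using edge_obtain[OF assms(1)] assms(2-4) by blast
lemma finEv: "finite (Ev v)" using finE by (simp add: Ev_def)
lemma degree_Ev: "degree E v = card (Ev v)" by (simp add: degree_def Ev_def)

lemma center_unique: assumes "X \<subseteq> E" "2 \<le> card X" "\<forall>e\<in>X. u \<in> e \<and> w \<in> e" shows "u = w"
proof (rule ccontr)
  assume "u \<noteq> w"
  then have "\<forall>e\<in>X. e = {u,w}" using assms two_pts by blast
  then have "X \<subseteq> {{u,w}}" by auto
  then have "card X \<le> card {{u,w}}" by (intro card_mono) auto
  then have "card X \<le> 1" by simp
  thus False using assms(2) by simp
qed

lemma deg_ge: assumes "a \<notin> N" "finite N" "\<forall>x\<in>N. {a,x} \<in> E" shows "card N \<le> degree E a"
proof -
  have "inj_on (\<lambda>x. {a,x}) N" using assms(1) by (auto simp: inj_on_def doubleton_eq_iff)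
  moreover have "(\<lambda>x. {a,x}) ` N \<subseteq> Ev a" using assms(3) by (auto simp: Ev_def)
  ultimately show ?thesis unfolding degree_Ev by (metis card_image card_mono finEv)
qed

lemma adj_LE: assumes "e \<noteq> f" shows "adj (line_graph_E V E) e f \<longleftrightarrow> e \<in> E \<and> f \<in> E \<and> e \<inter> f \<noteq> {}"
proof
  assume "adj (line_graph_E V E) e f"
  then obtain e' f' where h: "{e,f} = {e',f'}" "e' \<in> E" "f' \<in> E" "e' \<inter> f' \<noteq> {}"
    unfolding adj_def line_graph_E_def by blast
  from h(1) have "(e = e' \<and> f = f') \<or> (e = f' \<and> f = e')" by (simp add: doubleton_eq_iff)
  thus "e \<in> E \<and> f \<in> E \<and> e \<inter> f \<noteq> {}" using h by (metis inf_commute)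
next
  assume "e \<in> E \<and> f \<in> E \<and> e \<inter> f \<noteq> {}"
  thus "adj (line_graph_E V E) e f" using assms unfolding adj_def line_graph_E_def by blast
qed

lemma ltri_iff: "X \<in> LT \<longleftrightarrow> X \<subseteq> E \<and> card X = 3 \<and> (\<forall>e\<in>X. \<forall>f\<in>X. e \<noteq> f \<longrightarrow> e \<inter> f \<noteq> {})"
proof -
  have 1: "X \<in> LT \<longleftrightarrow> X \<subseteq> E \<and> card X = 3 \<and> (\<forall>e\<in>X. \<forall>f\<in>X. e \<noteq> f \<longrightarrow> adj (line_graph_E V E) e f)"
    by (simp only: triangles_def mem_Collect_eq)
  have 2: "(\<forall>e\<in>X. \<forall>f\<in>X. e \<noteq> f \<longrightarrow> adj (line_graph_E V E) e f) \<longleftrightarrow> (\<forall>e\<in>X. \<forall>f\<in>X. e \<noteq> f \<longrightarrow> e \<inter> f \<noteq> {})"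
    if "X \<subseteq> E"
  proof (intro iffI ballI impI)
    fix e f assume "\<forall>e\<in>X. \<forall>f\<in>X. e \<noteq> f \<longrightarrow> adj (line_graph_E V E) e f" "e \<in> X" "f \<in> X" "e \<noteq> f"
    then show "e \<inter> f \<noteq> {}" using adj_LE[of e f] by simp
  next
    fix e f assume "\<forall>e\<in>X. \<forall>f\<in>X. e \<noteq> f \<longrightarrow> e \<inter> f \<noteq> {}" "e \<in> X" "f \<in> X" "e \<noteq> f"
    then show "adj (line_graph_E V E) e f" using adj_LE[of e f] that by auto
  qed
  show ?thesis using 1 2 by (meson)
qed

lemma ce_iff: "{X,Y} \<in> CE \<longleftrightarrow> X \<in> LT \<and> Y \<in> LT \<and> X \<noteq> Y \<and> X \<inter> Y \<noteq> {}"
  unfolding C3_E_def by (auto simp: doubleton_eq_iff)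

lemma ce_elem: "P \<in> CE \<Longrightarrow> \<exists>X Y. P = {X,Y} \<and> X \<in> LT \<and> Y \<in> LT \<and> X \<noteq> Y \<and> X \<inter> Y \<noteq> {}"
  unfolding C3_E_def by auto


lemma edge_other: assumes "e \<in> E" "v \<in> e" obtains a where "a \<noteq> v" "e = {v,a}"
proof -
  obtain p q where "p \<noteq> q" "e = {p,q}" using edge_obtain[OF assms(1)] by blast
  thus ?thesis using that assms(2) by (metis doubleton_eq_iff insertE singletonD)
qed

lemma tri_adj: assumes "T \<in> TG" "x \<in> T" "y \<in> T" "x \<noteq> y" shows "{x,y} \<in> E"
  using assms unfolding triangles_def adj_def by blast

lemma tri_sub: "T \<in> TG \<Longrightarrow> T \<subseteq> V" unfolding triangles_def by blast
lemma tri_card: "T \<in> TG \<Longrightarrow> card T = 3" unfolding triangles_def by blast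
lemma finT: "T \<in> TG \<Longrightarrow> finite T" using tri_card by (metis card.infinite zero_neq_numeral)

lemma tri_obtain: assumes "T \<in> TG"
  obtains a b c where "a \<noteq> b" "b \<noteq> c" "a \<noteq> c" "T = {a,b,c}"
  using tri_card[OF assms] card_3_iff by metis

lemma tri_intro: assumes "a \<noteq> b" "b \<noteq> c" "a \<noteq> c" "{a,b} \<in> E" "{a,c} \<in> E" "{b,c} \<in> E"
  shows "{a,b,c} \<in> TG"
proof -
  have "{a,b,c} \<subseteq> V" using assms edge_sub by blast
  moreover have "card {a,b,c} = 3" using assms(1-3) by simp
  moreover have "\<forall>u\<in>{a,b,c}. \<forall>v\<in>{a,b,c}. u \<noteq> v \<longrightarrow> adj E u v"
    using assms(4-6) unfolding adj_def by (auto simp: insert_commute)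
  ultimately show ?thesis unfolding triangles_def by blast
qed

lemma tedges_eq: assumes "a \<noteq> b" "b \<noteq> c" "a \<noteq> c"
  shows "tedges {a,b,c} = {{a,b},{a,c},{b,c}}"
  unfolding tedges_def using assms by (auto simp: insert_commute)

lemma card3_edges: assumes "a \<noteq> b" "b \<noteq> c" "a \<noteq> c"
  shows "card {{a,b},{a,c},{b,c}} = 3"
  using assms by (simp add: doubleton_eq_iff)

lemma Union_tedges: "T \<in> TG \<Longrightarrow> \<Union>(tedges T) = T"
proof -
  assume "T \<in> TG"
  then obtain a b c where h: "a \<noteq> b" "b \<noteq> c" "a \<noteq> c" "T = {a,b,c}" by (rule tri_obtain)
  show ?thesis unfolding h(4) tedges_eq[OF h(1-3)] by auto
qed

lemma tedges_LT: assumes "T \<in> TG" shows "tedges T \<in> LT"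
proof -
  obtain a b c where h: "a \<noteq> b" "b \<noteq> c" "a \<noteq> c" "T = {a,b,c}" using assms by (rule tri_obtain)
  have e: "{a,b} \<in> E" "{a,c} \<in> E" "{b,c} \<in> E" using tri_adj[OF assms] h by auto
  show ?thesis unfolding ltri_iff h(4) tedges_eq[OF h(1-3)] card3_edges[OF h(1-3)]
    using e by auto
qed

lemma tedges_not_star: assumes "T \<in> TG" shows "\<not> isstar (tedges T)"
proof -
  obtain a b c where h: "a \<noteq> b" "b \<noteq> c" "a \<noteq> c" "T = {a,b,c}" using assms by (rule tri_obtain)
  show ?thesis unfolding isstar_def h(4) tedges_eq[OF h(1-3)] using h(1-3) by auto
qed

lemma tedges_sub: assumes "T \<in> TG" shows "tedges T \<subseteq> E"
  using tedges_LT[OF assms] ltri_iff by blast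

lemma star_LT: assumes "S \<subseteq> Ev v" "card S = 3" shows "S \<in> LT"
  using assms unfolding ltri_iff Ev_def by auto

lemma star_isstar: assumes "S \<subseteq> Ev v" shows "isstar S"
  using assms unfolding isstar_def Ev_def by auto

lemma classify: assumes "X \<in> LT"
  shows "(\<exists>v\<in>V. X \<subseteq> Ev v) \<or> (\<exists>T\<in>TG. X = tedges T)"
proof -
  have X: "X \<subseteq> E" "card X = 3" "\<And>e f. e \<in> X \<Longrightarrow> f \<in> X \<Longrightarrow> e \<noteq> f \<Longrightarrow> e \<inter> f \<noteq> {}"
    using assms unfolding ltri_iff by auto
  obtain e1 e2 e3 where d: "X = {e1,e2,e3}" "e1 \<noteq> e2" "e2 \<noteq> e3" "e1 \<noteq> e3"
    using X(2) card_3_iff by metis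
  have inE: "e1 \<in> E" "e2 \<in> E" "e3 \<in> E" using X(1) d(1) by auto
  obtain v where v: "v \<in> e1" "v \<in> e2" using X(3)[of e1 e2] d by auto
  obtain a where a: "a \<noteq> v" "e1 = {v,a}" using edge_other[OF inE(1) v(1)] by blast
  obtain b where b: "b \<noteq> v" "e2 = {v,b}" using edge_other[OF inE(2) v(2)] by blast
  have ab: "a \<noteq> b" using a b d(2) by auto
  have vV: "v \<in> V" using edge_sub[OF inE(1)] v(1) by auto
  show ?thesis
  proof (cases "v \<in> e3")
    case True
    then have "X \<subseteq> Ev v" using d(1) inE v unfolding Ev_def by auto
    thus ?thesis using vV by blast
  next
    case False
    have "e3 \<inter> e1 \<noteq> {}" using X(3)[of e3 e1] d by auto
    then have a3: "a \<in> e3" using a False by auto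
    have "e3 \<inter> e2 \<noteq> {}" using X(3)[of e3 e2] d by auto
    then have b3: "b \<in> e3" using b False by auto
    have e3: "e3 = {a,b}" using two_pts[OF inE(3) a3 b3 ab] .
    have T: "{v,a,b} \<in> TG" using tri_intro[of v a b] a b ab inE e3 by auto
    have "X = tedges {v,a,b}" unfolding tedges_eq[OF a(1)[symmetric] ab b(1)[symmetric]]
      using d(1) a b e3 by auto
    thus ?thesis using T by blast
  qed
qed


lemma tedges_inj: "S \<in> TG \<Longrightarrow> T \<in> TG \<Longrightarrow> tedges S = tedges T \<Longrightarrow> S = T"
  using Union_tedges by metis

lemma ce_not_self: "{X,X} \<notin> CE" using ce_iff[of X X] by blast
lemma E_not_self: "{u,u} \<notin> E" using edge_card by fastforce

end

locale cond = sg +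
  assumes C1: "\<forall>v\<in>V. degree E v = 2 \<or> degree E v = 3"
    and C2: "\<forall>v\<in>V. degree E v = 2 \<longrightarrow> (\<exists>t\<in>triangles V E. v \<in> t)"
    and C3: "\<forall>t\<in>triangles V E. card {v \<in> t. degree E v = 2} = 1"
    and C4: "\<forall>s\<in>triangles V E. \<forall>t\<in>triangles V E. s \<noteq> t \<longrightarrow> s \<inter> t = {}"
begin

definition tri_of :: "'a \<Rightarrow> 'a set" where "tri_of v = (THE T. T \<in> TG \<and> v \<in> T)"
definition phi :: "'a \<Rightarrow> 'a set set" where
  "phi v = (if degree E v = 3 then Ev v else tedges (tri_of v))"

lemma tri_of_unique: assumes "T \<in> TG" "v \<in> T" shows "tri_of v = T"
  unfolding tri_of_def
proof (rule the_equality)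
  show "T \<in> TG \<and> v \<in> T" using assms by simp
  fix S assume "S \<in> TG \<and> v \<in> S" then show "S = T" using C4 assms by blast
qed

lemma tri_of: assumes "v \<in> V" "degree E v = 2" shows "tri_of v \<in> TG" "v \<in> tri_of v"
proof -
  obtain T where "T \<in> TG" "v \<in> T" using C2 assms by blast
  thus "tri_of v \<in> TG" "v \<in> tri_of v" using tri_of_unique by auto
qed

lemma nbr2: assumes "v \<in> V" "degree E v = 2" "{v,u} \<in> E" shows "u \<in> tri_of v"
proof -
  let ?T = "tri_of v"
  have T: "?T \<in> TG" "v \<in> ?T" using tri_of[OF assms(1,2)] by auto
  let ?N = "?T - {v}"
  have cN: "card ?N = 2" using tri_card[OF T(1)] T(2) finT[OF T(1)] by simp
  have inj: "inj_on (\<lambda>x. {v,x}) ?N" by (auto simp: inj_on_def doubleton_eq_iff)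
  have sub: "(\<lambda>x. {v,x}) ` ?N \<subseteq> Ev v" using tri_adj[OF T(1) T(2)] unfolding Ev_def by auto
  have "card ((\<lambda>x. {v,x}) ` ?N) = card (Ev v)"
    using card_image[OF inj] cN assms(2) degree_Ev by simp
  then have eq: "(\<lambda>x. {v,x}) ` ?N = Ev v" using card_subset_eq[OF finEv sub] by simp
  have "{v,u} \<in> Ev v" using assms(3) unfolding Ev_def by simp
  then obtain x where "x \<in> ?N" "{v,u} = {v,x}" using eq by auto
  thus ?thesis by (auto simp: doubleton_eq_iff)
qed

lemma phi_LT: assumes "v \<in> V" shows "phi v \<in> LT"
proof (cases "degree E v = 3")
  case True
  then show ?thesis unfolding phi_def using star_LT[of "Ev v" v] degree_Ev by simp
next
  case False
  then have "degree E v = 2" using C1 assms by blast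
  then show ?thesis unfolding phi_def using False tedges_LT tri_of[OF assms] by simp
qed

lemma star_ne_tedges: assumes "S \<subseteq> Ev v" "T \<in> TG" shows "S \<noteq> tedges T"
  using star_isstar[OF assms(1)] tedges_not_star[OF assms(2)] by metis

lemma Ev_center: assumes "degree E u = 3" "Ev u \<subseteq> Ev v" shows "u = v"
proof -
  have "Ev u \<subseteq> E" "2 \<le> card (Ev u)" using assms degree_Ev unfolding Ev_def by auto
  moreover have "\<forall>e\<in>Ev u. u \<in> e \<and> v \<in> e" using assms(2) unfolding Ev_def by auto
  ultimately show ?thesis using center_unique by blast
qed

lemma phi_inj: "inj_on phi V"
proof (rule inj_onI)
  fix u v assume uv: "u \<in> V" "v \<in> V" "phi u = phi v"
  consider "degree E u = 3" "degree E v = 3" | "degree E u = 3" "degree E v = 2"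
    | "degree E u = 2" "degree E v = 3" | "degree E u = 2" "degree E v = 2" using C1 uv by blast
  then show "u = v"
  proof cases
    case 1
    then show ?thesis using uv(3) Ev_center unfolding phi_def by simp
  next
    case 2
    then show ?thesis using uv(3) star_ne_tedges[of "Ev u" u "tri_of v"] tri_of[OF uv(2)] unfolding phi_def by simp
  next
    case 3
    then show ?thesis using uv(3) star_ne_tedges[of "Ev v" v "tri_of u"] tri_of[OF uv(1)] unfolding phi_def by simp
  next
    case 4
    then have "tedges (tri_of u) = tedges (tri_of v)" using uv(3) unfolding phi_def by simp
    then have T: "tri_of u = tri_of v" using tedges_inj tri_of uv 4 by metis
    let ?T = "tri_of u"
    have "u \<in> {x \<in> ?T. degree E x = 2}" "v \<in> {x \<in> ?T. degree E x = 2}"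
      using tri_of uv 4 T by auto
    moreover have "card {x \<in> ?T. degree E x = 2} = 1" using C3 tri_of uv 4 by blast
    ultimately show ?thesis by (metis card_1_singletonE singletonD)
  qed
qed

lemma phi_surj: assumes "X \<in> LT" shows "\<exists>v\<in>V. phi v = X"
  using classify[OF assms]
proof
  assume "\<exists>v\<in>V. X \<subseteq> Ev v"
  then obtain v where v: "v \<in> V" "X \<subseteq> Ev v" by blast
  have c: "card X = 3" using assms ltri_iff by blast
  have "card X \<le> card (Ev v)" using card_mono[OF finEv v(2)] .
  then have d: "degree E v = 3" using C1 v(1) c degree_Ev by fastforce
  then have "X = Ev v" using card_subset_eq[OF finEv v(2)] c degree_Ev by simp
  thus ?thesis using v(1) d unfolding phi_def by auto
next
  assume "\<exists>T\<in>TG. X = tedges T"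
  then obtain T where T: "T \<in> TG" "X = tedges T" by blast
  have "card {x \<in> T. degree E x = 2} = 1" using C3 T by blast
  then obtain w where "{x \<in> T. degree E x = 2} = {w}" by (rule card_1_singletonE)
  then have w: "w \<in> T" "degree E w = 2" by auto
  have wV: "w \<in> V" using tri_sub[OF T(1)] w by auto
  have "tri_of w = T" using tri_of_unique T w by blast
  then have "phi w = X" unfolding phi_def using w T by simp
  thus ?thesis using wV by blast
qed

lemma phi_bij: "bij_betw phi V LT"
  unfolding bij_betw_def using phi_inj phi_LT phi_surj by blast

lemma phi_adj: assumes "u \<in> V" "v \<in> V" shows "{u,v} \<in> E \<longleftrightarrow> {phi u, phi v} \<in> CE"
proof (cases "u = v")
  case True
  then show ?thesis using ce_not_self E_not_self by simp
next
  case False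
  have ne: "phi u \<noteq> phi v" using phi_inj assms False inj_on_def by metis
  have "{phi u, phi v} \<in> CE \<longleftrightarrow> phi u \<inter> phi v \<noteq> {}"
    using ce_iff phi_LT assms ne by blast
  also have "\<dots> \<longleftrightarrow> {u,v} \<in> E"
  proof -
    consider "degree E u = 3" "degree E v = 3" | "degree E u = 3" "degree E v = 2"
      | "degree E u = 2" "degree E v = 3" | "degree E u = 2" "degree E v = 2" using C1 assms by blast
    then show ?thesis
    proof cases
      case 1
      have "Ev u \<inter> Ev v \<noteq> {} \<longleftrightarrow> {u,v} \<in> E"
      proof
        assume "Ev u \<inter> Ev v \<noteq> {}"
        then obtain e where "e \<in> E" "u \<in> e" "v \<in> e" unfolding Ev_def by auto
        thus "{u,v} \<in> E" using two_pts False by metis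
      next
        assume "{u,v} \<in> E" thus "Ev u \<inter> Ev v \<noteq> {}" unfolding Ev_def by auto
      qed
      thus ?thesis using 1 unfolding phi_def by simp
    next
      case 2
      have T: "tri_of v \<in> TG" "v \<in> tri_of v" using tri_of assms 2 by auto
      have "Ev u \<inter> tedges (tri_of v) \<noteq> {} \<longleftrightarrow> {u,v} \<in> E"
      proof
        assume "Ev u \<inter> tedges (tri_of v) \<noteq> {}"
        then obtain e where "u \<in> e" "e \<in> tedges (tri_of v)" unfolding Ev_def by auto
        then have "u \<in> tri_of v" using Union_tedges[OF T(1)] by blast
        thus "{u,v} \<in> E" using tri_adj[OF T(1)] T(2) False by blast
      next
        assume "{u,v} \<in> E"
        then have "u \<in> tri_of v" using nbr2[OF assms(2) 2(2)] by (simp add: insert_commute)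
        then have "{u,v} \<in> tedges (tri_of v)" using T(2) False unfolding tedges_def by blast
        moreover have "{u,v} \<in> Ev u" using \<open>{u,v} \<in> E\<close> unfolding Ev_def by simp
        ultimately show "Ev u \<inter> tedges (tri_of v) \<noteq> {}" by blast
      qed
      thus ?thesis using 2 unfolding phi_def by simp
    next
      case 3
      have T: "tri_of u \<in> TG" "u \<in> tri_of u" using tri_of assms 3 by auto
      have "tedges (tri_of u) \<inter> Ev v \<noteq> {} \<longleftrightarrow> {u,v} \<in> E"
      proof
        assume "tedges (tri_of u) \<inter> Ev v \<noteq> {}"
        then obtain e where "v \<in> e" "e \<in> tedges (tri_of u)" unfolding Ev_def by auto
        then have "v \<in> tri_of u" using Union_tedges[OF T(1)] by blast
        thus "{u,v} \<in> E" using tri_adj[OF T(1)] T(2) False by blast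
      next
        assume "{u,v} \<in> E"
        then have "v \<in> tri_of u" using nbr2[OF assms(1) 3(1)] by simp
        then have "{u,v} \<in> tedges (tri_of u)" using T(2) False unfolding tedges_def by blast
        moreover have "{u,v} \<in> Ev v" using \<open>{u,v} \<in> E\<close> unfolding Ev_def by simp
        ultimately show "tedges (tri_of u) \<inter> Ev v \<noteq> {}" by blast
      qed
      thus ?thesis using 3 unfolding phi_def by simp
    next
      case 4
      have Tu: "tri_of u \<in> TG" "u \<in> tri_of u" using tri_of assms 4 by auto
      have Tv: "tri_of v \<in> TG" "v \<in> tri_of v" using tri_of assms 4 by auto
      have neT: "tri_of u \<noteq> tri_of v" using ne 4 unfolding phi_def by auto
      then have disj: "tri_of u \<inter> tri_of v = {}" using C4 Tu Tv by blast
      have "tedges (tri_of u) \<inter> tedges (tri_of v) = {}"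
      proof (rule ccontr)
        assume "tedges (tri_of u) \<inter> tedges (tri_of v) \<noteq> {}"
        then obtain e where e: "e \<in> tedges (tri_of u)" "e \<in> tedges (tri_of v)" by blast
        then obtain a b where "e = {a,b}" unfolding tedges_def by blast
        then have "a \<in> tri_of u" "a \<in> tri_of v" using e Union_tedges Tu Tv by blast+
        thus False using disj by blast
      qed
      moreover have "{u,v} \<notin> E"
      proof
        assume "{u,v} \<in> E"
        then have "v \<in> tri_of u" using nbr2[OF assms(1) 4(1)] by simp
        thus False using disj Tv by blast
      qed
      ultimately show ?thesis using 4 unfolding phi_def by simp
    qed
  qed
  finally show ?thesis by simp
qed

lemma iso: "graph_iso LT CE V E"
proof -
  let ?f = "the_inv_into V phi"
  have b: "bij_betw ?f LT V" using bij_betw_the_inv_into[OF phi_bij] .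
  have "\<forall>X\<in>LT. \<forall>Y\<in>LT. {X,Y} \<in> CE \<longleftrightarrow> {?f X, ?f Y} \<in> E"
  proof (intro ballI)
    fix X Y assume XY: "X \<in> LT" "Y \<in> LT"
    have fX: "?f X \<in> V" "phi (?f X) = X" using b XY phi_bij f_the_inv_into_f_bij_betw bij_betwE by metis+
    have fY: "?f Y \<in> V" "phi (?f Y) = Y" using b XY phi_bij f_the_inv_into_f_bij_betw bij_betwE by metis+
    show "{X,Y} \<in> CE \<longleftrightarrow> {?f X, ?f Y} \<in> E" using phi_adj[OF fX(1) fY(1)] fX(2) fY(2) by simp
  qed
  thus ?thesis unfolding graph_iso_def using b by blast
qed

end

context sg begin


definition S3 :: "'a \<Rightarrow> 'a set set set" where "S3 v = {S. S \<subseteq> Ev v \<and> card S = 3}"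

lemma finLT: "finite LT"
proof -
  have "LT \<subseteq> Pow E" using ltri_iff by blast
  thus ?thesis using finE by (meson finite_Pow_iff finite_subset)
qed

lemma CE_sub: "P \<in> CE \<Longrightarrow> P \<subseteq> LT" using ce_elem by blast

lemma finCE: "finite CE"
proof -
  have "CE \<subseteq> Pow LT" using CE_sub by blast
  thus ?thesis using finLT by (meson finite_Pow_iff finite_subset)
qed

lemma card_S3: "card (S3 v) = degree E v choose 3"
  unfolding S3_def degree_Ev using n_subsets[OF finEv] by simp

lemma finS3: "finite (S3 v)"
proof -
  have "S3 v \<subseteq> Pow (Ev v)" unfolding S3_def by blast
  thus ?thesis using finEv by (meson finite_Pow_iff finite_subset)
qed

lemma card_LT_le: "card LT \<le> (\<Sum>v\<in>V. degree E v choose 3) + card TG"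
proof -
  have "LT \<subseteq> (\<Union>v\<in>V. S3 v) \<union> tedges ` TG"
  proof
    fix X assume X: "X \<in> LT"
    then have c: "card X = 3" using ltri_iff by blast
    show "X \<in> (\<Union>v\<in>V. S3 v) \<union> tedges ` TG"
      using classify[OF X] c unfolding S3_def by blast
  qed
  moreover have "finite TG"
  proof -
    have "TG \<subseteq> Pow V" using tri_sub by blast
    thus ?thesis using finV by (meson finite_Pow_iff finite_subset)
  qed
  ultimately have "card LT \<le> card ((\<Union>v\<in>V. S3 v) \<union> tedges ` TG)"
    using finV finS3 by (intro card_mono) auto
  also have "\<dots> \<le> card (\<Union>v\<in>V. S3 v) + card (tedges ` TG)" by (rule card_Un_le)
  also have "\<dots> \<le> (\<Sum>v\<in>V. card (S3 v)) + card TG"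
    using card_UN_le[OF finV, of S3] card_image_le[OF \<open>finite TG\<close>, of tedges] by linarith
  finally show ?thesis using card_S3 by simp
qed

lemma finTG: "finite TG"
proof -
  have "TG \<subseteq> Pow V" using tri_sub by blast
  thus ?thesis using finV by (meson finite_Pow_iff finite_subset)
qed

lemma star_nbrs: assumes S: "S \<subseteq> Ev v" "card S = 3"
  shows "3 * (degree E v - 3) \<le> card {P \<in> CE. S \<in> P}"
proof -
  let ?g = "\<lambda>(a,b). insert b (S - {a})"
  let ?D = "S \<times> (Ev v - S)"
  have finS: "finite S" using S(2) by (metis card.infinite zero_neq_numeral)
  have injg: "inj_on ?g ?D"
  proof (rule inj_onI, clarify)
    fix a b a' b' assume h: "a \<in> S" "b \<in> Ev v" "b \<notin> S" "a' \<in> S" "b' \<in> Ev v" "b' \<notin> S"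
      "insert b (S - {a}) = insert b' (S - {a'})"
    have "b \<in> insert b' (S - {a'})" using h(7) by blast
    then have bb: "b = b'" using h(3) by blast
    have "S - {a} = S - {a'}"
    proof -
      have "S - {a} = insert b (S - {a}) - {b}" using h(3) by blast
      also have "\<dots> = insert b' (S - {a'}) - {b'}" using h(7) bb by simp
      also have "\<dots> = S - {a'}" using h(6) by blast
      finally show ?thesis .
    qed
    then have "a = a'" using h(1,4) by blast
    thus "a = a' \<and> b = b'" using bb by simp
  qed
  have cD: "card ?D = 3 * (degree E v - 3)"
    using card_cartesian_product[of S "Ev v - S"] card_Diff_subset[OF finS S(1)] S(2) degree_Ev by simp
  have SLT: "S \<in> LT" using star_LT[OF S] .
  have mem: "{S, ?g p} \<in> CE" if p: "p \<in> ?D" for p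
  proof -
    obtain a b where ab: "p = (a,b)" "a \<in> S" "b \<in> Ev v" "b \<notin> S" using p by auto
    let ?Y = "insert b (S - {a})"
    have c2: "card (S - {a}) = 2" using S(2) ab(2) finS by simp
    have cY: "card ?Y = 3" using c2 ab(4) finS by simp
    have YLT: "?Y \<in> LT" using star_LT[of ?Y v] cY ab S(1) by auto
    have ne: "S \<noteq> ?Y" using ab(4) by blast
    have "S - {a} \<noteq> {}" using c2 by (metis card.empty zero_neq_numeral)
    then have "S \<inter> ?Y \<noteq> {}" by blast
    thus ?thesis using ce_iff SLT YLT ne ab(1) by simp
  qed
  have inj2: "inj_on (\<lambda>Y. {S, Y}) (?g ` ?D)"
  proof (rule inj_onI)
    fix Y Y' assume h: "Y \<in> ?g ` ?D" "Y' \<in> ?g ` ?D" "{S,Y} = {S,Y'}"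
    have "Y \<noteq> S" "Y' \<noteq> S" using h(1,2) by auto
    thus "Y = Y'" using h(3) by (metis doubleton_eq_iff)
  qed
  have sub: "(\<lambda>Y. {S, Y}) ` (?g ` ?D) \<subseteq> {P \<in> CE. S \<in> P}" using mem by auto
  have "card ?D = card (?g ` ?D)" using card_image[OF injg] by simp
  also have "\<dots> = card ((\<lambda>Y. {S, Y}) ` (?g ` ?D))" using card_image[OF inj2] by simp
  also have "\<dots> \<le> card {P \<in> CE. S \<in> P}" using card_mono[OF _ sub] finCE by simp
  finally show ?thesis using cD by simp
qed


definition st :: "'a \<Rightarrow> 'a set \<Rightarrow> 'a set set" where
  "st x e = (SOME S. S \<subseteq> Ev x \<and> card S = 3 \<and> e \<in> S)"

lemma st_spec: assumes "e \<in> Ev x" "3 \<le> degree E x"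
  shows "st x e \<subseteq> Ev x" "card (st x e) = 3" "e \<in> st x e"
proof -
  have "2 \<le> card (Ev x - {e})" using assms degree_Ev finEv by simp
  then obtain S0 where S0: "S0 \<subseteq> Ev x - {e}" "card S0 = 2" "finite S0"
    by (rule obtain_subset_with_card_n)
  have "e \<notin> S0" using S0 by blast
  then have "insert e S0 \<subseteq> Ev x \<and> card (insert e S0) = 3 \<and> e \<in> insert e S0"
    using S0 assms(1) by auto
  then have "\<exists>S. S \<subseteq> Ev x \<and> card S = 3 \<and> e \<in> S" by blast
  then have "st x e \<subseteq> Ev x \<and> card (st x e) = 3 \<and> e \<in> st x e"
    unfolding st_def by (rule someI_ex)
  thus "st x e \<subseteq> Ev x" "card (st x e) = 3" "e \<in> st x e" by auto
qed

lemma isstar_mono: "isstar X \<Longrightarrow> Y \<subseteq> X \<Longrightarrow> isstar Y" unfolding isstar_def by blast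

lemma star_center: assumes "S \<subseteq> Ev u" "card S = 3" "\<forall>e\<in>S. w \<in> e" shows "u = w"
proof -
  have "S \<subseteq> E" using assms(1) unfolding Ev_def by auto
  moreover have "\<forall>e\<in>S. u \<in> e \<and> w \<in> e" using assms(1,3) unfolding Ev_def by auto
  ultimately show ?thesis using center_unique[of S u w] assms(2) by simp
qed

definition "Aset = {P \<in> CE. (\<forall>X\<in>P. isstar X) \<and> \<not> isstar (\<Union>P)}"
definition "Bset = {P \<in> CE. (\<exists>X\<in>P. isstar X) \<and> (\<exists>Y\<in>P. \<not> isstar Y)}"
definition "Cset = {P \<in> CE. isstar (\<Union>P)}"
definition "Dset = {P \<in> CE. \<forall>X\<in>P. \<not> isstar X}"

lemma CE_ne: "P \<in> CE \<Longrightarrow> P \<noteq> {}" using ce_elem by blast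

lemma ABCD_le: "card Aset + card Bset + card Cset + card Dset \<le> card CE"
proof -
  have fin: "finite Aset" "finite Bset" "finite Cset" "finite Dset"
    using finCE unfolding Aset_def Bset_def Cset_def Dset_def by auto
  have d1: "Aset \<inter> Bset = {}" unfolding Aset_def Bset_def by blast
  have d2: "(Aset \<union> Bset) \<inter> Cset = {}"
    unfolding Aset_def Bset_def Cset_def using isstar_mono by blast
  have d3: "(Aset \<union> Bset \<union> Cset) \<inter> Dset = {}"
  proof -
    have "P \<notin> Dset" if "P \<in> Aset \<union> Bset \<union> Cset" for P
    proof -
      have "P \<in> CE" using that unfolding Aset_def Bset_def Cset_def by blast
      then obtain X where "X \<in> P" using CE_ne by blast
      then show ?thesis using that isstar_mono[of "\<Union>P" X]
        unfolding Aset_def Bset_def Cset_def Dset_def by blast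
    qed
    thus ?thesis by blast
  qed
  have "card Aset + card Bset + card Cset + card Dset = card (Aset \<union> Bset \<union> Cset \<union> Dset)"
    using fin d1 d2 d3 by (simp add: card_Un_disjoint)
  also have "\<dots> \<le> card CE"
    using finCE unfolding Aset_def Bset_def Cset_def Dset_def by (intro card_mono) auto
  finally show ?thesis .
qed

definition "EHH = {e \<in> E. \<forall>x\<in>e. 3 \<le> degree E x}"
definition "Erest = {e \<in> E. \<exists>x\<in>e. degree E x \<le> 2}"
definition "ELL = {e \<in> E. \<forall>x\<in>e. degree E x \<le> 2}"

lemma A_props: assumes e: "e \<in> EHH"
  shows "(\<lambda>x. st x e) ` e \<in> Aset" "\<forall>X\<in>(\<lambda>x. st x e) ` e. e \<in> X"
    "\<exists>u w. u \<noteq> w \<and> e = {u,w} \<and> st u e \<in> (\<lambda>x. st x e) ` e \<and> st w e \<in> (\<lambda>x. st x e) ` e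
       \<and> st u e \<subseteq> Ev u \<and> st w e \<subseteq> Ev w"
proof -
  let ?h = "\<lambda>e. (\<lambda>x. st x e) ` e"
  have eE: "e \<in> E" using e unfolding EHH_def by blast
  obtain u w where uw: "u \<noteq> w" "e = {u,w}" using edge_obtain[OF eE] by blast
  have du: "3 \<le> degree E u" "3 \<le> degree E w" using e uw unfolding EHH_def by auto
  have eu: "e \<in> Ev u" "e \<in> Ev w" using eE uw unfolding Ev_def by auto
  note su = st_spec[OF eu(1) du(1)] and sw = st_spec[OF eu(2) du(2)]
  have img: "?h e = {st u e, st w e}" using uw by auto
  have L1: "st u e \<in> LT" "st w e \<in> LT" using star_LT su sw by auto
  have ne: "st u e \<noteq> st w e"
  proof
    assume "st u e = st w e"
    then have "\<forall>x\<in>st u e. w \<in> x" using sw(1) unfolding Ev_def by auto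
    thus False using star_center[OF su(1) su(2)] uw(1) by blast
  qed
  have "st u e \<inter> st w e \<noteq> {}" using su(3) sw(3) by blast
  then have ce: "?h e \<in> CE" using img ce_iff L1 ne by simp
  have stars: "\<forall>X\<in>?h e. isstar X" using img star_isstar su(1) sw(1) by auto
  have ns: "\<not> isstar (\<Union>(?h e))"
  proof
    assume "isstar (\<Union>(?h e))"
    then obtain z where z0: "\<forall>x\<in>\<Union>(?h e). z \<in> x" unfolding isstar_def by blast
    have z: "\<forall>x\<in>st u e \<union> st w e. z \<in> x" using z0 img by simp
    have "u = z" using star_center[OF su(1) su(2)] z by blast
    moreover have "w = z" using star_center[OF sw(1) sw(2)] z by blast
    ultimately show False using uw(1) by simp
  qed
  show "?h e \<in> Aset" unfolding Aset_def using ce stars ns by simp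
  show "\<forall>X\<in>?h e. e \<in> X" using img su(3) sw(3) by simp
  have a3: "st u e \<in> ?h e" "st w e \<in> ?h e" using img by auto
  show "\<exists>u w. u \<noteq> w \<and> e = {u,w} \<and> st u e \<in> ?h e \<and> st w e \<in> ?h e
       \<and> st u e \<subseteq> Ev u \<and> st w e \<subseteq> Ev w"
    apply (rule exI[of _ u], rule exI[of _ w]) using a3 uw su(1) sw(1) by simp
qed

lemma A_lower: "card EHH \<le> card Aset"
proof -
  let ?h = "\<lambda>e. (\<lambda>x. st x e) ` e"
  have "inj_on ?h EHH"
  proof (rule inj_onI)
    fix e e' assume h: "e \<in> EHH" "e' \<in> EHH" "?h e = ?h e'"
    obtain u w where uw: "u \<noteq> w" "e = {u,w}" "st u e \<in> ?h e" "st w e \<in> ?h e" "st u e \<subseteq> Ev u" "st w e \<subseteq> Ev w"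
      using A_props(3)[OF h(1)] by (elim exE conjE)
    have all: "\<forall>X\<in>?h e'. e' \<in> X" using A_props(2)[OF h(2)] .
    have "st u e \<in> ?h e'" "st w e \<in> ?h e'" using uw(3,4) h(3) by simp_all
    then have "e' \<in> st u e" "e' \<in> st w e" using all by blast+
    then have "u \<in> e'" "w \<in> e'" "e' \<in> E" using uw(5,6) unfolding Ev_def by auto
    then have "e' = {u,w}" using two_pts uw(1) by blast
    thus "e = e'" using uw(2) by simp
  qed
  moreover have "?h ` EHH \<subseteq> Aset" using A_props(1) by blast
  moreover have "finite Aset" using finCE unfolding Aset_def by auto
  ultimately show ?thesis using card_image card_mono by metis
qed

definition ed :: "'a set \<Rightarrow> 'a \<Rightarrow> 'a set" where "ed T v = (SOME e. e \<in> tedges T \<and> v \<in> e)"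

lemma ed_spec: assumes "T \<in> TG" "v \<in> T" shows "ed T v \<in> tedges T" "v \<in> ed T v"
proof -
  have "card T = 3" using tri_card[OF assms(1)] .
  then have "card (T - {v}) = 2" using assms(2) finT[OF assms(1)] by simp
  then have "T - {v} \<noteq> {}" by (metis card.empty zero_neq_numeral)
  then obtain x where x: "x \<in> T" "x \<noteq> v" by blast
  have "{v,x} \<in> tedges T \<and> v \<in> {v,x}" unfolding tedges_def using x assms(2) by blast
  then have "\<exists>e. e \<in> tedges T \<and> v \<in> e" by blast
  then have "ed T v \<in> tedges T \<and> v \<in> ed T v" unfolding ed_def by (rule someI_ex)
  thus "ed T v \<in> tedges T" "v \<in> ed T v" by auto
qed


lemma B_mem: assumes "T \<in> TG" "v \<in> T" "3 \<le> degree E v"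
  shows "{st v (ed T v), tedges T} \<in> Bset" "st v (ed T v) \<subseteq> Ev v" "card (st v (ed T v)) = 3"
proof -
  have e1: "ed T v \<in> tedges T" "v \<in> ed T v" using ed_spec[OF assms(1,2)] by auto
  have "ed T v \<in> E" using e1(1) tedges_sub[OF assms(1)] by blast
  then have eEv: "ed T v \<in> Ev v" using e1(2) unfolding Ev_def by simp
  note s = st_spec[OF eEv assms(3)]
  have SL: "st v (ed T v) \<in> LT" using star_LT[OF s(1) s(2)] .
  have NL: "tedges T \<in> LT" using tedges_LT[OF assms(1)] .
  have ss: "isstar (st v (ed T v))" using star_isstar[OF s(1)] .
  have ns: "\<not> isstar (tedges T)" using tedges_not_star[OF assms(1)] .
  have ne: "st v (ed T v) \<noteq> tedges T" using ss ns by metis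
  have "st v (ed T v) \<inter> tedges T \<noteq> {}" using s(3) e1(1) by blast
  then have "{st v (ed T v), tedges T} \<in> CE" using ce_iff SL NL ne by simp
  then show "{st v (ed T v), tedges T} \<in> Bset" unfolding Bset_def using ss ns by blast
  show "st v (ed T v) \<subseteq> Ev v" "card (st v (ed T v)) = 3" using s by auto
qed

lemma B_lower: "(\<Sum>T\<in>TG. card {v \<in> T. 3 \<le> degree E v}) \<le> card Bset"
proof -
  let ?I = "Sigma TG (\<lambda>T. {v \<in> T. 3 \<le> degree E v})"
  let ?m = "\<lambda>(T,v). {st v (ed T v), tedges T}"
  have cI: "card ?I = (\<Sum>T\<in>TG. card {v \<in> T. 3 \<le> degree E v})"
    using finTG finT by (intro card_SigmaI) auto
  have sub: "?m ` ?I \<subseteq> Bset" using B_mem(1) by auto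
  have inj: "inj_on ?m ?I"
  proof (rule inj_onI, clarify)
    fix T v T' v' assume h: "T \<in> TG" "v \<in> T" "3 \<le> degree E v" "T' \<in> TG" "v' \<in> T'" "3 \<le> degree E v'"
      "{st v (ed T v), tedges T} = {st v' (ed T' v'), tedges T'}"
    have ss: "isstar (st v (ed T v))" using star_isstar[OF B_mem(2)[OF h(1-3)]] .
    have ns: "\<not> isstar (tedges T')" using tedges_not_star[OF h(4)] .
    have "st v (ed T v) \<noteq> tedges T'" using ss ns by metis
    then have eq: "st v (ed T v) = st v' (ed T' v')" "tedges T = tedges T'" using h(7) by (metis doubleton_eq_iff)+
    have "T = T'" using tedges_inj[OF h(1) h(4) eq(2)] .
    moreover have "\<forall>e\<in>st v (ed T v). v' \<in> e" using eq(1) B_mem(2)[OF h(4-6)] unfolding Ev_def by auto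
    then have "v = v'" using star_center[OF B_mem(2,3)[OF h(1-3)]] by blast
    ultimately show "T = T' \<and> v = v'" by simp
  qed
  have "finite Bset" using finCE unfolding Bset_def by auto
  then have "card (?m ` ?I) \<le> card Bset" using card_mono sub by blast
  thus ?thesis using card_image[OF inj] cI by simp
qed


definition Cv :: "'a \<Rightarrow> 'a set set set set" where "Cv v = {P. P \<subseteq> S3 v \<and> card P = 2}"

lemma card_Cv: assumes "degree E v = 4" shows "card (Cv v) = 6"
proof -
  have "card (S3 v) = 4" using card_S3 assms by (simp add: numeral_eq_Suc)
  then show ?thesis unfolding Cv_def using n_subsets[OF finS3, of v 2] by (simp add: numeral_eq_Suc)
qed

lemma finCv: "finite (Cv v)"
proof -
  have "Cv v \<subseteq> Pow (S3 v)" unfolding Cv_def by blast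
  thus ?thesis using finS3 by (meson finite_Pow_iff finite_subset)
qed

lemma Cv_sub: assumes "degree E v = 4" shows "Cv v \<subseteq> Cset"
proof
  fix P assume P: "P \<in> Cv v"
  then obtain S S' where SS: "P = {S,S'}" "S \<noteq> S'" unfolding Cv_def by (metis (mono_tags, lifting) card_2_iff mem_Collect_eq)
  have S: "S \<subseteq> Ev v" "card S = 3" "S' \<subseteq> Ev v" "card S' = 3" using P SS unfolding Cv_def S3_def by auto
  have fS: "finite S" "finite S'" using S finEv finite_subset by blast+
  have "card (S \<union> S') \<le> card (Ev v)" using S by (intro card_mono[OF finEv]) auto
  then have "card (S \<union> S') \<le> 4" using assms degree_Ev by simp
  moreover have "card (S \<union> S') + card (S \<inter> S') = 6" using card_Un_Int[OF fS] S by simp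
  ultimately have "card (S \<inter> S') \<noteq> 0" by linarith
  then have "S \<inter> S' \<noteq> {}" by (metis card.empty)
  then have "P \<in> CE" using SS ce_iff star_LT S by simp
  moreover have "isstar (\<Union>P)" using star_isstar[of "\<Union>P" v] SS S by auto
  ultimately show "P \<in> Cset" unfolding Cset_def by simp
qed

lemma C_lower: "6 * card {v \<in> V. degree E v = 4} \<le> card Cset"
proof -
  let ?V4 = "{v \<in> V. degree E v = 4}"
  have fin4: "finite ?V4" using finV by simp
  have disj: "\<forall>i\<in>?V4. \<forall>j\<in>?V4. i \<noteq> j \<longrightarrow> Cv i \<inter> Cv j = {}"
  proof (intro ballI impI)
    fix i j assume ij: "i \<in> ?V4" "j \<in> ?V4" "i \<noteq> j"
    show "Cv i \<inter> Cv j = {}"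
    proof (rule ccontr)
      assume "Cv i \<inter> Cv j \<noteq> {}"
      then obtain P where P: "P \<in> Cv i" "P \<in> Cv j" by blast
      have "card P = 2" using P(1) unfolding Cv_def by simp
      then have "P \<noteq> {}" by (metis card.empty zero_neq_numeral)
      then obtain S where "S \<in> P" by blast
      then have S: "S \<subseteq> Ev i" "card S = 3" "S \<subseteq> Ev j" using P unfolding Cv_def S3_def by auto
      have "\<forall>e\<in>S. j \<in> e" using S(3) unfolding Ev_def by auto
      then have "i = j" using star_center[OF S(1) S(2)] by simp
      thus False using ij(3) by simp
    qed
  qed
  have "card (\<Union>(Cv ` ?V4)) = (\<Sum>v\<in>?V4. card (Cv v))"
    using card_UN_disjoint[OF fin4 _ disj] finCv by simp
  also have "\<dots> = (\<Sum>v\<in>?V4. 6)" using card_Cv by simp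
  also have "\<dots> = 6 * card ?V4" by simp
  finally have eq: "card (\<Union>(Cv ` ?V4)) = 6 * card ?V4" .
  have sub: "\<Union>(Cv ` ?V4) \<subseteq> Cset" using Cv_sub by blast
  have fC: "finite Cset" using finCE unfolding Cset_def by auto
  show ?thesis using card_mono[OF fC sub] eq by simp
qed


lemma E_split: "card E = card EHH + card Erest"
proof -
  have "E = EHH \<union> Erest" unfolding EHH_def Erest_def by force
  moreover have "EHH \<inter> Erest = {}" unfolding EHH_def Erest_def by force
  moreover have "finite EHH" "finite Erest" using finE unfolding EHH_def Erest_def by auto
  ultimately show ?thesis by (metis card_Un_disjoint)
qed

lemma low_sum: "card Erest + card ELL \<le> (\<Sum>v\<in>{v\<in>V. degree E v \<le> 2}. degree E v)"
proof -
  let ?L = "{v\<in>V. degree E v \<le> 2}"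
  have finL: "finite ?L" using finV by simp
  have "(\<Sum>v\<in>?L. degree E v) = (\<Sum>v\<in>?L. \<Sum>e\<in>E. if v \<in> e then 1 else 0)"
  proof (rule sum.cong[OF refl])
    fix v
    have "degree E v = card {e\<in>E. v \<in> e}" unfolding degree_def ..
    also have "\<dots> = (\<Sum>e\<in>{e\<in>E. v \<in> e}. 1)" by simp
    also have "\<dots> = (\<Sum>e\<in>E. if v \<in> e then 1 else 0)" using sum.inter_filter[OF finE, of "\<lambda>_. (1::nat)" "\<lambda>e. v \<in> e"] by simp
    finally show "degree E v = (\<Sum>e\<in>E. if v \<in> e then 1 else 0)" .
  qed
  also have "\<dots> = (\<Sum>e\<in>E. \<Sum>v\<in>?L. if v \<in> e then 1 else 0)" by (rule sum.swap)
  finally have eq1: "(\<Sum>v\<in>?L. degree E v) = (\<Sum>e\<in>E. \<Sum>v\<in>?L. if v \<in> e then (1::nat) else 0)" .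
  have cR: "card Erest = (\<Sum>e\<in>E. if e \<in> Erest then 1 else 0)"
    unfolding Erest_def using sum.inter_filter[OF finE, of "\<lambda>_. (1::nat)" "\<lambda>e. e \<in> Erest"] unfolding Erest_def by simp
  have cL: "card ELL = (\<Sum>e\<in>E. if e \<in> ELL then 1 else 0)"
    unfolding ELL_def using sum.inter_filter[OF finE, of "\<lambda>_. (1::nat)" "\<lambda>e. e \<in> ELL"] unfolding ELL_def by simp
  have pw: "(if e \<in> Erest then 1 else 0) + (if e \<in> ELL then 1 else 0) \<le> (\<Sum>v\<in>?L. if v \<in> e then (1::nat) else 0)"
    if e: "e \<in> E" for e
  proof -
    have s: "(\<Sum>v\<in>?L. if v \<in> e then (1::nat) else 0) = card {v \<in> ?L. v \<in> e}"
      using sum.inter_filter[OF finL, of "\<lambda>_. (1::nat)" "\<lambda>v. v \<in> e"] by simp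
    obtain a b where ab: "a \<noteq> b" "e = {a,b}" using edge_obtain[OF e] by blast
    have abV: "a \<in> V" "b \<in> V" using edge_sub[OF e] ab by auto
    have finS: "finite {v \<in> ?L. v \<in> e}" using finV by simp
    show ?thesis
    proof (cases "e \<in> ELL")
      case True
      then have "degree E a \<le> 2" "degree E b \<le> 2" using ab unfolding ELL_def by auto
      then have "{a,b} \<subseteq> {v \<in> ?L. v \<in> e}" using abV ab by auto
      then have "card {a,b} \<le> card {v \<in> ?L. v \<in> e}" by (rule card_mono[OF finS])
      then have "2 \<le> card {v \<in> ?L. v \<in> e}" using ab(1) by simp
      thus ?thesis using s by simp
    next
      case False
      show ?thesis
      proof (cases "e \<in> Erest")
        case True
        then obtain x where "x \<in> e" "degree E x \<le> 2" unfolding Erest_def by auto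
        then have "x \<in> {v \<in> ?L. v \<in> e}" using edge_sub[OF e] by auto
        then have "{v \<in> ?L. v \<in> e} \<noteq> {}" by blast
        then have "0 < card {v \<in> ?L. v \<in> e}" using finS by (simp add: card_gt_0_iff)
        then have "1 \<le> card {v \<in> ?L. v \<in> e}" by simp
        thus ?thesis using s False by simp
      next
        case False
        thus ?thesis using \<open>e \<notin> ELL\<close> by simp
      qed
    qed
  qed
  have "card Erest + card ELL = (\<Sum>e\<in>E. (if e \<in> Erest then 1 else 0) + (if e \<in> ELL then 1 else 0))"
    using cR cL by (simp add: sum.distrib)
  also have "\<dots> \<le> (\<Sum>e\<in>E. \<Sum>v\<in>?L. if v \<in> e then (1::nat) else 0)"
    using pw by (intro sum_mono) simp
  finally show ?thesis using eq1 by simp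
qed

lemma two_tri_deg: assumes "T \<in> TG" "T' \<in> TG" "T \<noteq> T'" "a \<in> T" "a \<in> T'"
  shows "3 \<le> degree E a"
proof -
  have fin: "finite T" "finite T'" using finT assms by auto
  have c: "card T = 3" "card T' = 3" using tri_card assms by auto
  have "\<not> card (T \<union> T') \<le> 3"
  proof
    assume "card (T \<union> T') \<le> 3"
    then have "T = T \<union> T'" "T' = T \<union> T'" using card_subset_eq[of "T \<union> T'"] fin c card_mono[of "T \<union> T'"]
      by (metis Un_upper1 Un_upper2 finite_Un le_antisym)+
    thus False using assms(3) by simp
  qed
  then have c4: "4 \<le> card (T \<union> T')" by simp
  let ?N = "(T \<union> T') - {a}"
  have "card ?N = card (T \<union> T') - 1" using assms(4) fin by simp
  then have cN: "3 \<le> card ?N" using c4 by simp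
  have "\<forall>x\<in>?N. {a,x} \<in> E" using tri_adj assms by blast
  then have "card ?N \<le> degree E a" using deg_ge[of a ?N] fin by simp
  thus ?thesis using cN by simp
qed

lemma LL_disj: "(\<Sum>T\<in>TG. card {e \<in> ELL. e \<subseteq> T}) \<le> card ELL"
proof -
  have disj: "\<forall>i\<in>TG. \<forall>j\<in>TG. i \<noteq> j \<longrightarrow> {e \<in> ELL. e \<subseteq> i} \<inter> {e \<in> ELL. e \<subseteq> j} = {}"
  proof (intro ballI impI)
    fix T T' assume h: "T \<in> TG" "T' \<in> TG" "T \<noteq> T'"
    show "{e \<in> ELL. e \<subseteq> T} \<inter> {e \<in> ELL. e \<subseteq> T'} = {}"
    proof (rule ccontr)
      assume "{e \<in> ELL. e \<subseteq> T} \<inter> {e \<in> ELL. e \<subseteq> T'} \<noteq> {}"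
      then obtain e where e: "e \<in> ELL" "e \<subseteq> T" "e \<subseteq> T'" by blast
      then have eE: "e \<in> E" unfolding ELL_def by simp
      obtain a b where ab: "a \<noteq> b" "e = {a,b}" using edge_obtain[OF eE] by blast
      have "degree E a \<le> 2" using e(1) ab unfolding ELL_def by auto
      moreover have "3 \<le> degree E a" using two_tri_deg[OF h] e ab by auto
      ultimately show False by simp
    qed
  qed
  have finE': "\<forall>T\<in>TG. finite {e \<in> ELL. e \<subseteq> T}" using finE unfolding ELL_def by simp
  have "(\<Sum>T\<in>TG. card {e \<in> ELL. e \<subseteq> T}) = card (\<Union>T\<in>TG. {e \<in> ELL. e \<subseteq> T})"
    using card_UN_disjoint[OF finTG finE' disj] by simp
  also have "\<dots> \<le> card ELL" using finE unfolding ELL_def by (intro card_mono) auto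
  finally show ?thesis .
qed

lemma hLL: assumes T: "T \<in> TG"
  shows "2 \<le> card {v \<in> T. 3 \<le> degree E v} + card {e \<in> ELL. e \<subseteq> T}"
proof -
  let ?H = "{v \<in> T. 3 \<le> degree E v}" and ?Lw = "{v \<in> T. degree E v \<le> 2}"
  have fin: "finite T" using finT[OF T] .
  have u: "T = ?H \<union> ?Lw" by auto
  have "card (?H \<union> ?Lw) = card ?H + card ?Lw" by (rule card_Un_disjoint) (use fin in auto)
  then have cs: "card ?H + card ?Lw = 3" using tri_card[OF T] u by simp
  have finLL: "finite {e \<in> ELL. e \<subseteq> T}" using finE unfolding ELL_def by simp
  show ?thesis
  proof (cases "2 \<le> card ?H")
    case True thus ?thesis by simp
  next
    case False
    then have cl: "2 \<le> card ?Lw" using cs by simp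
    then obtain P where P: "P \<subseteq> ?Lw" "card P = 2" "finite P" by (rule obtain_subset_with_card_n)
    then obtain x y where xy: "P = {x,y}" "x \<noteq> y" using card_2_iff[of P] by blast
    have xyT: "x \<in> T" "y \<in> T" "degree E x \<le> 2" "degree E y \<le> 2" using P xy by auto
    have exy: "{x,y} \<in> {e \<in> ELL. e \<subseteq> T}"
      using tri_adj[OF T xyT(1,2) xy(2)] xyT unfolding ELL_def by auto
    show ?thesis
    proof (cases "card ?H = 1")
      case True
      have "{e \<in> ELL. e \<subseteq> T} \<noteq> {}" using exy by blast
      then have "0 < card {e \<in> ELL. e \<subseteq> T}" using finLL by (simp add: card_gt_0_iff)
      then have "1 \<le> card {e \<in> ELL. e \<subseteq> T}" by simp
      thus ?thesis using True by simp
    next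
      case False
      then have "card ?Lw = 3" using cs \<open>\<not> 2 \<le> card ?H\<close> by simp
      have "?Lw \<subseteq> T" by blast
      then have "?Lw = T" using card_subset_eq[OF fin, of ?Lw] tri_card[OF T] \<open>card ?Lw = 3\<close> by simp
      have "{x,y} \<subseteq> T" using xyT by simp
      then have "card (T - {x,y}) = card T - card {x,y}" using card_Diff_subset[of "{x,y}" T] by simp
      then have "card (T - {x,y}) = 1" using tri_card[OF T] xy(2) by simp
      then obtain z where "T - {x,y} = {z}" by (rule card_1_singletonE)
      then have z: "z \<in> T" "z \<noteq> x" "z \<noteq> y" by auto
      have "degree E z \<le> 2" using z(1) \<open>?Lw = T\<close> by blast
      then have exz: "{x,z} \<in> {e \<in> ELL. e \<subseteq> T}"
        using tri_adj[OF T xyT(1) z(1) z(2)[symmetric]] xyT z unfolding ELL_def by auto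
      have "{x,y} \<noteq> {x,z}" using z xy(2) by (auto simp: doubleton_eq_iff)
      then have "card {{x,y},{x,z}} = 2" by simp
      moreover have "{{x,y},{x,z}} \<subseteq> {e \<in> ELL. e \<subseteq> T}" using exy exz by blast
      ultimately have "2 \<le> card {e \<in> ELL. e \<subseteq> T}" using card_mono[OF finLL, of "{{x,y},{x,z}}"] by simp
      thus ?thesis by simp
    qed
  qed
qed


end

locale conv = sg +
  assumes iso: "graph_iso LT CE V E"
begin

definition f :: "'a set set \<Rightarrow> 'a" where
  "f = (SOME f. bij_betw f LT V \<and> (\<forall>X\<in>LT. \<forall>Y\<in>LT. {X,Y} \<in> CE \<longleftrightarrow> {f X, f Y} \<in> E))"

lemma f_props: "bij_betw f LT V \<and> (\<forall>X\<in>LT. \<forall>Y\<in>LT. {X,Y} \<in> CE \<longleftrightarrow> {f X, f Y} \<in> E)"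
  using iso unfolding graph_iso_def f_def by (rule someI_ex)

lemma f_bij: "bij_betw f LT V" using f_props by blast
lemma f_adj: "X \<in> LT \<Longrightarrow> Y \<in> LT \<Longrightarrow> {X,Y} \<in> CE \<Longrightarrow> {f X, f Y} \<in> E" using f_props by blast
lemma f_inj: "inj_on f LT" using f_bij bij_betw_def by blast
lemma f_in: "X \<in> LT \<Longrightarrow> f X \<in> V" using f_bij bij_betwE by blast

lemma card_V_eq: "card V = card LT" using bij_betw_same_card[OF f_bij] by simp

lemma img_CE: assumes "P \<in> CE" shows "f ` P \<in> E"
proof -
  obtain X Y where "P = {X,Y}" "X \<in> LT" "Y \<in> LT" "{X,Y} \<in> CE" using ce_elem[OF assms] ce_iff by metis
  thus ?thesis using f_adj by simp
qed

lemma img_inj: "inj_on (\<lambda>P. f ` P) CE"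
proof (rule inj_onI)
  fix P Q assume h: "P \<in> CE" "Q \<in> CE" "f ` P = f ` Q"
  show "P = Q" using inj_on_image_eq_iff[OF f_inj CE_sub[OF h(1)] CE_sub[OF h(2)]] h(3) by simp
qed

lemma card_CE_le: "card CE \<le> card E"
proof -
  have "(\<lambda>P. f ` P) ` CE \<subseteq> E" using img_CE by blast
  then have "card ((\<lambda>P. f ` P) ` CE) \<le> card E" by (rule card_mono[OF finE])
  thus ?thesis using card_image[OF img_inj] by simp
qed

lemma deg_f: assumes "X \<in> LT" shows "card {P \<in> CE. X \<in> P} \<le> degree E (f X)"
proof -
  have sub: "(\<lambda>P. f ` P) ` {P \<in> CE. X \<in> P} \<subseteq> Ev (f X)" using img_CE unfolding Ev_def by blast
  have inj: "inj_on (\<lambda>P. f ` P) {P \<in> CE. X \<in> P}" using img_inj by (rule inj_on_subset) blast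
  have "card ((\<lambda>P. f ` P) ` {P \<in> CE. X \<in> P}) \<le> card (Ev (f X))" by (rule card_mono[OF finEv sub])
  thus ?thesis using card_image[OF inj] degree_Ev by simp
qed

lemma deg_le4: assumes "v \<in> V" shows "degree E v \<le> 4"
proof -
  let ?M = "Max (degree E ` V)"
  have ne: "V \<noteq> {}" using assms by blast
  have fin: "finite (degree E ` V)" using finV by simp
  have Mge: "degree E v \<le> ?M" using Max_ge[OF fin] assms by simp
  obtain v0 where v0: "v0 \<in> V" "degree E v0 = ?M" using Max_in[OF fin] ne by (metis empty_is_image imageE)
  have "?M \<le> 4"
  proof (rule ccontr)
    assume "\<not> ?M \<le> 4"
    then have M5: "5 \<le> ?M" by simp
    then have "3 \<le> card (Ev v0)" using v0 degree_Ev by simp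
    then obtain S where S: "S \<subseteq> Ev v0" "card S = 3" "finite S" by (rule obtain_subset_with_card_n)
    have SL: "S \<in> LT" using star_LT[OF S(1,2)] .
    have "3 * (?M - 3) \<le> card {P \<in> CE. S \<in> P}" using star_nbrs[OF S(1,2)] v0(2) by simp
    also have "\<dots> \<le> degree E (f S)" using deg_f[OF SL] .
    also have "\<dots> \<le> ?M" using Max_ge[OF fin] f_in[OF SL] by simp
    finally show False using M5 by simp
  qed
  thus ?thesis using Mge by simp
qed


lemma choose_bound: assumes "(d::nat) \<le> 4"
  shows "d choose 3 \<le> (if 3 \<le> d then 1 else 0) + (if d = 4 then 3 else 0)"
proof -
  have "d = 0 \<or> d = 1 \<or> d = 2 \<or> d = 3 \<or> d = 4" using assms by arith
  thus ?thesis by (auto simp: numeral_eq_Suc)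
qed

lemma choose_23: assumes "(d::nat) = 2 \<or> d = 3"
  shows "d choose 3 = (if 3 \<le> d then 1 else 0)"
  using assms by (auto simp: numeral_eq_Suc)


lemma sum_ind: "finite A \<Longrightarrow> (\<Sum>x\<in>A. if P x then (c::nat) else 0) = c * card {x \<in> A. P x}"
proof -
  assume fA: "finite A"
  have "(\<Sum>x\<in>A. if P x then c else 0) = (\<Sum>x\<in>{x \<in> A. P x}. c)"
    using sum.inter_filter[OF fA, of "\<lambda>_. c" P] by simp
  thus ?thesis by simp
qed

lemma main_ineq:
  shows "Dset = {}" "\<forall>v\<in>V. degree E v \<le> 2 \<longrightarrow> degree E v = 2"
    "\<forall>T\<in>TG. card {v \<in> T. 3 \<le> degree E v} \<le> 2"
proof -
  let ?d = "degree E"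
  let ?H = "{v \<in> V. 3 \<le> ?d v}" and ?L = "{v \<in> V. ?d v \<le> 2}" and ?V4 = "{v \<in> V. ?d v = 4}"
  let ?t = "card TG"
  let ?h = "\<lambda>T. card {v \<in> T. 3 \<le> ?d v}" and ?ll = "\<lambda>T. card {e \<in> ELL. e \<subseteq> T}"
  have finL: "finite ?L" using finV by simp
  have i: "card V \<le> (\<Sum>v\<in>V. ?d v choose 3) + ?t" using card_LT_le card_V_eq by simp
  have "(\<Sum>v\<in>V. ?d v choose 3) \<le> (\<Sum>v\<in>V. (if 3 \<le> ?d v then 1 else 0) + (if ?d v = 4 then 3 else 0))"
    using choose_bound deg_le4 by (intro sum_mono) simp
  also have "\<dots> = card ?H + 3 * card ?V4"
    using sum_ind[OF finV, of "\<lambda>v. 3 \<le> ?d v" 1] sum_ind[OF finV, of "\<lambda>v. ?d v = 4" 3]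
    by (simp add: sum.distrib)
  finally have ii: "(\<Sum>v\<in>V. ?d v choose 3) \<le> card ?H + 3 * card ?V4" .
  have iii: "card V = card ?H + card ?L"
  proof -
    have "V = ?H \<union> ?L" by auto
    moreover have "card (?H \<union> ?L) = card ?H + card ?L" by (rule card_Un_disjoint) (use finV in auto)
    ultimately show ?thesis by simp
  qed
  have iv: "(\<Sum>v\<in>?L. ?d v) + (\<Sum>v\<in>?L. 2 - ?d v) = 2 * card ?L"
  proof -
    have "(\<Sum>v\<in>?L. ?d v) + (\<Sum>v\<in>?L. 2 - ?d v) = (\<Sum>v\<in>?L. ?d v + (2 - ?d v))" by (rule sum.distrib[symmetric])
    also have "\<dots> = (\<Sum>v\<in>?L. 2)" by (rule sum.cong) auto
    also have "\<dots> = 2 * card ?L" by simp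
    finally show ?thesis .
  qed
  have v: "card EHH + (\<Sum>T\<in>TG. ?h T) + 6 * card ?V4 + card Dset \<le> card E"
    using A_lower B_lower C_lower ABCD_le card_CE_le by linarith
  have vi: "card E = card EHH + card Erest" by (rule E_split)
  have vii: "card Erest + card ELL \<le> (\<Sum>v\<in>?L. ?d v)" by (rule low_sum)
  have viii: "(\<Sum>T\<in>TG. ?ll T) \<le> card ELL" by (rule LL_disj)
  have sumhl: "(\<Sum>T\<in>TG. ?h T + ?ll T) = (\<Sum>T\<in>TG. ?h T) + (\<Sum>T\<in>TG. ?ll T)" by (rule sum.distrib)
  have two: "(\<Sum>T\<in>TG. (2::nat)) = 2 * ?t" by simp
  have s1: "(\<Sum>T\<in>TG. ?h T) + 6 * card ?V4 + card Dset + (\<Sum>T\<in>TG. ?ll T) \<le> (\<Sum>v\<in>?L. ?d v)"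
    using v vi vii viii by linarith
  have s2: "card ?L \<le> 3 * card ?V4 + ?t" using i ii iii by linarith
  have s3: "(\<Sum>T\<in>TG. ?h T) + card Dset + (\<Sum>T\<in>TG. ?ll T) + (\<Sum>v\<in>?L. 2 - ?d v) \<le> 2 * ?t"
    using s1 s2 iv by linarith
  have key: "(\<Sum>T\<in>TG. ?h T + ?ll T) + card Dset + (\<Sum>v\<in>?L. 2 - ?d v) \<le> (\<Sum>T\<in>TG. 2)"
    unfolding sumhl two using s3 by linarith
  have low: "(\<Sum>T\<in>TG. (2::nat)) \<le> (\<Sum>T\<in>TG. ?h T + ?ll T)" using hLL by (intro sum_mono) simp
  have D0: "card Dset = 0" using key low by linarith
  have fD: "finite Dset" using finCE unfolding Dset_def by simp
  show "Dset = {}" using D0 fD by simp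
  have "(\<Sum>v\<in>?L. 2 - ?d v) = 0" using key low by linarith
  then have "\<forall>v\<in>?L. 2 - ?d v = 0" using sum_eq_0_iff[OF finL, of "\<lambda>v. 2 - ?d v"] by simp
  then show "\<forall>v\<in>V. ?d v \<le> 2 \<longrightarrow> ?d v = 2" by auto
  show "\<forall>T\<in>TG. ?h T \<le> 2"
  proof (rule ccontr)
    assume "\<not> (\<forall>T\<in>TG. ?h T \<le> 2)"
    then obtain T0 where T0: "T0 \<in> TG" "2 < ?h T0" by auto
    have a1: "\<forall>T\<in>TG. (2::nat) \<le> ?h T + ?ll T" using hLL by blast
    have a2: "\<exists>T\<in>TG. (2::nat) < ?h T + ?ll T" using T0 by (intro bexI[OF _ T0(1)]) simp
    have "(\<Sum>T\<in>TG. (2::nat)) < (\<Sum>T\<in>TG. ?h T + ?ll T)"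
      by (rule sum_strict_mono_ex1[OF finTG a1 a2])
    thus False using key by linarith
  qed
qed


lemma no_deg4: assumes v: "v \<in> V" "degree E v = 4" shows False
proof -
  let ?X = "\<lambda>e. Ev v - {e}"
  let ?g = "\<lambda>e. f (?X e)"
  have cE: "card (Ev v) = 4" using v degree_Ev by simp
  have XL: "?X e \<in> LT" if "e \<in> Ev v" for e
  proof -
    have "card (?X e) = 3" using cE that finEv by simp
    thus ?thesis using star_LT[of "?X e" v] by blast
  qed
  have adj: "{?g e, ?g e'} \<in> E \<and> ?X e \<noteq> ?X e'" if "e \<in> Ev v" "e' \<in> Ev v" "e \<noteq> e'" for e e'
  proof -
    have ne: "?X e \<noteq> ?X e'" using that by blast
    have "?X e \<inter> ?X e' = Ev v - {e,e'}" by blast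
    moreover have "card (Ev v - {e,e'}) = 2"
      using cE that finEv card_Diff_subset[of "{e,e'}" "Ev v"] by simp
    ultimately have "?X e \<inter> ?X e' \<noteq> {}" by (metis card.empty zero_neq_numeral)
    then have "{?X e, ?X e'} \<in> CE" using ce_iff XL that ne by simp
    thus ?thesis using f_adj XL that ne by simp
  qed
  have inj: "inj_on ?g (Ev v)"
  proof (rule inj_onI, rule ccontr)
    fix e e' assume h: "e \<in> Ev v" "e' \<in> Ev v" "?g e = ?g e'" "e \<noteq> e'"
    have "?X e = ?X e'" using inj_onD[OF f_inj h(3) XL[OF h(1)] XL[OF h(2)]] .
    thus False using adj[OF h(1,2,4)] by simp
  qed
  let ?W = "?g ` Ev v"
  have cW: "card ?W = 4" using card_image[OF inj] cE by simp
  have finW: "finite ?W" using finEv by simp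
  have WV: "?W \<subseteq> V" using f_in XL by blast
  have adjW: "{w,w'} \<in> E" if ww: "w \<in> ?W" "w' \<in> ?W" "w \<noteq> w'" for w w'
  proof -
    obtain e e' where ee: "e \<in> Ev v" "e' \<in> Ev v" "w = ?g e" "w' = ?g e'" using ww(1,2) by blast
    have ne: "e \<noteq> e'" using ee ww(3) by blast
    show ?thesis using adj[OF ee(1,2) ne] ee(3,4) by simp
  qed
  have degW: "3 \<le> degree E w" if "w \<in> ?W" for w
  proof -
    have "card (?W - {w}) = 3" using cW that finW by simp
    moreover have "\<forall>x\<in>?W - {w}. {w,x} \<in> E"
    proof
      fix x assume "x \<in> ?W - {w}" then show "{w,x} \<in> E" using adjW[of w x] that by auto
    qed
    ultimately show ?thesis using deg_ge[of w "?W - {w}"] finW by simp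
  qed
  have "3 \<le> card ?W" using cW by simp
  then obtain T where T: "T \<subseteq> ?W" "card T = 3" "finite T" by (rule obtain_subset_with_card_n)
  have "\<forall>x\<in>T. \<forall>y\<in>T. x \<noteq> y \<longrightarrow> adj E x y"
  proof (intro ballI impI)
    fix x y assume "x \<in> T" "y \<in> T" "x \<noteq> y"
    then show "adj E x y" using adjW[of x y] T(1) unfolding adj_def by auto
  qed
  moreover have "T \<subseteq> V" using T(1) WV by simp
  ultimately have TG: "T \<in> TG" unfolding triangles_def using T(2) by simp
  have "{x \<in> T. 3 \<le> degree E x} = T" using degW T(1) by blast
  then have "card {x \<in> T. 3 \<le> degree E x} = 3" using T(2) by simp
  moreover have "card {x \<in> T. 3 \<le> degree E x} \<le> 2" using main_ineq(3) TG by blast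
  ultimately show False by simp
qed

lemma deg23: "v \<in> V \<Longrightarrow> degree E v = 2 \<or> degree E v = 3"
  using deg_le4 no_deg4 main_ineq(2) by fastforce

lemma L_le_t: "card {v \<in> V. degree E v = 2} \<le> card TG"
proof -
  let ?H = "{v \<in> V. 3 \<le> degree E v}" and ?L = "{v \<in> V. degree E v = 2}"
  have "card V \<le> (\<Sum>v\<in>V. degree E v choose 3) + card TG" using card_LT_le card_V_eq by simp
  also have "(\<Sum>v\<in>V. degree E v choose 3) = (\<Sum>v\<in>V. if 3 \<le> degree E v then 1 else 0)"
    using choose_23 deg23 by (intro sum.cong) auto
  also have "\<dots> = card ?H" using sum_ind[OF finV, of "\<lambda>v. 3 \<le> degree E v" 1] by simp
  finally have a: "card V \<le> card ?H + card TG" .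
  have "V \<subseteq> ?H \<union> ?L"
  proof
    fix x assume "x \<in> V" then show "x \<in> ?H \<union> ?L" using deg23[of x] by auto
  qed
  then have "V = ?H \<union> ?L" by blast
  moreover have "card (?H \<union> ?L) = card ?H + card ?L" by (rule card_Un_disjoint) (use finV in auto)
  ultimately show ?thesis using a by simp
qed


lemma low_ex: assumes T: "T \<in> TG" shows "\<exists>a\<in>T. degree E a = 2"
proof (rule ccontr)
  assume "\<not> (\<exists>a\<in>T. degree E a = 2)"
  then have "\<forall>a\<in>T. 3 \<le> degree E a" using deg23 tri_sub[OF T] by fastforce
  then have "{v \<in> T. 3 \<le> degree E v} = T" by blast
  then have "card {v \<in> T. 3 \<le> degree E v} = 3" using tri_card[OF T] by simp
  moreover have "card {v \<in> T. 3 \<le> degree E v} \<le> 2" using main_ineq(3) T by blast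
  ultimately show False by simp
qed

definition g :: "'a set \<Rightarrow> 'a" where "g T = (SOME a. a \<in> T \<and> degree E a = 2)"

lemma g_spec: "T \<in> TG \<Longrightarrow> g T \<in> T \<and> degree E (g T) = 2"
  unfolding g_def using low_ex by (metis (mono_tags, lifting) someI_ex)

lemma low_uniq: assumes "T \<in> TG" "T' \<in> TG" "a \<in> T" "a \<in> T'" "degree E a = 2" shows "T = T'"
  using two_tri_deg[of T T' a] assms by fastforce

lemma g_onto: "g ` TG = {v \<in> V. degree E v = 2}"
proof -
  let ?L = "{v \<in> V. degree E v = 2}"
  have inj: "inj_on g TG"
  proof (rule inj_onI)
    fix T T' assume h: "T \<in> TG" "T' \<in> TG" "g T = g T'"
    show "T = T'" using low_uniq[OF h(1,2)] g_spec[OF h(1)] g_spec[OF h(2)] h(3) by simp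
  qed
  have sub: "g ` TG \<subseteq> ?L" using g_spec tri_sub by blast
  have finL: "finite ?L" using finV by simp
  have "card (g ` TG) = card TG" using card_image[OF inj] .
  then have "card (g ` TG) = card ?L" using L_le_t card_mono[OF finL sub] by simp
  thus ?thesis using card_subset_eq[OF finL sub] by simp
qed

lemma concl1: "\<forall>v\<in>V. degree E v = 2 \<or> degree E v = 3" using deg23 by blast

lemma concl2: "\<forall>v\<in>V. degree E v = 2 \<longrightarrow> (\<exists>t\<in>triangles V E. v \<in> t)"
proof (intro ballI impI)
  fix v assume "v \<in> V" "degree E v = 2"
  then have "v \<in> g ` TG" using g_onto by blast
  then obtain T where "T \<in> TG" "v = g T" by blast
  thus "\<exists>t\<in>triangles V E. v \<in> t" using g_spec by blast
qed

lemma concl3: "\<forall>t\<in>triangles V E. card {v \<in> t. degree E v = 2} = 1"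
proof
  fix T assume T: "T \<in> TG"
  have "{v \<in> T. degree E v = 2} = {g T}"
  proof
    show "{g T} \<subseteq> {v \<in> T. degree E v = 2}" using g_spec[OF T] by simp
  next
    show "{v \<in> T. degree E v = 2} \<subseteq> {g T}"
    proof
      fix b assume b: "b \<in> {v \<in> T. degree E v = 2}"
      then have "b \<in> g ` TG" using g_onto tri_sub[OF T] by blast
      then obtain T' where T': "T' \<in> TG" "b = g T'" by blast
      have "b \<in> T'" using g_spec[OF T'(1)] T'(2) by simp
      then have "T = T'" using low_uniq[OF T T'(1)] b by blast
      thus "b \<in> {g T}" using T' by simp
    qed
  qed
  thus "card {v \<in> T. degree E v = 2} = 1" by simp
qed

lemma concl4: "\<forall>s\<in>triangles V E. \<forall>t\<in>triangles V E. s \<noteq> t \<longrightarrow> s \<inter> t = {}"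
proof (intro ballI impI)
  fix s t assume st: "s \<in> TG" "t \<in> TG" "s \<noteq> t"
  show "s \<inter> t = {}"
  proof (rule ccontr)
    assume "s \<inter> t \<noteq> {}"
    then obtain x where x: "x \<in> s" "x \<in> t" by blast
    show False
    proof (cases "\<exists>y. y \<in> s \<and> y \<in> t \<and> y \<noteq> x")
      case True
      then obtain y where y: "y \<in> s" "y \<in> t" "y \<noteq> x" by blast
      have "{x,y} \<in> tedges s" "{x,y} \<in> tedges t" unfolding tedges_def using x y by blast+
      then have "tedges s \<inter> tedges t \<noteq> {}" by blast
      moreover have "tedges s \<noteq> tedges t" using tedges_inj st by blast
      ultimately have "{tedges s, tedges t} \<in> CE" using ce_iff tedges_LT st by simp
      then have "{tedges s, tedges t} \<in> Dset" unfolding Dset_def using tedges_not_star st by simp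
      thus False using main_ineq(1) by simp
    next
      case False
      then have i: "s \<inter> t = {x}" using x by blast
      have fin: "finite s" "finite t" using finT st by auto
      have "card (s \<union> t) + card (s \<inter> t) = card s + card t" using card_Un_Int[OF fin] by simp
      then have "card (s \<union> t) = 5" using i tri_card st by simp
      then have c4: "card ((s \<union> t) - {x}) = 4" using x fin by simp
      have "\<forall>y\<in>(s \<union> t) - {x}. {x,y} \<in> E"
      proof
        fix y assume "y \<in> (s \<union> t) - {x}"
        then show "{x,y} \<in> E" using tri_adj st x by blast
      qed
      then have "4 \<le> degree E x" using deg_ge[of x "(s \<union> t) - {x}"] fin c4 by simp
      moreover have "x \<in> V" using tri_sub st x by blast
      ultimately show False using deg23 by fastforce
    qed
  qed
qed

end

theorem theorem6:
  fixes V :: "'a set" and E :: "'a set set"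
  assumes "fin_simple_graph V E" and "connected_graph V E"
  shows "graph_iso (C3_V (line_graph_V V E) (line_graph_E V E))
                   (C3_E (line_graph_V V E) (line_graph_E V E)) V E
    \<longleftrightarrow> ((\<forall>v\<in>V. degree E v = 2 \<or> degree E v = 3)
       \<and> (\<forall>v\<in>V. degree E v = 2 \<longrightarrow> (\<exists>t\<in>triangles V E. v \<in> t))
       \<and> (\<forall>t\<in>triangles V E. card {v \<in> t. degree E v = 2} = 1)
       \<and> (\<forall>s\<in>triangles V E. \<forall>t\<in>triangles V E. s \<noteq> t \<longrightarrow> s \<inter> t = {}))"
proof -
  have eq1: "C3_V (line_graph_V V E) (line_graph_E V E) = triangles E (line_graph_E V E)"
    unfolding C3_V_def line_graph_V_def by (rule refl)
  have eq2: "C3_E (line_graph_V V E) (line_graph_E V E) = C3_E E (line_graph_E V E)"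
    unfolding line_graph_V_def by (rule refl)
  show ?thesis unfolding eq1 eq2
  proof
    assume gi: "graph_iso (triangles E (line_graph_E V E)) (C3_E E (line_graph_E V E)) V E"
    have "conv V E" unfolding conv_def conv_axioms_def sg_def using assms(1) gi by simp
    then interpret conv V E .
    show "(\<forall>v\<in>V. degree E v = 2 \<or> degree E v = 3)
       \<and> (\<forall>v\<in>V. degree E v = 2 \<longrightarrow> (\<exists>t\<in>triangles V E. v \<in> t))
       \<and> (\<forall>t\<in>triangles V E. card {v \<in> t. degree E v = 2} = 1)
       \<and> (\<forall>s\<in>triangles V E. \<forall>t\<in>triangles V E. s \<noteq> t \<longrightarrow> s \<inter> t = {})"
      using concl1 concl2 concl3 concl4 by blast
  next
    assume h: "(\<forall>v\<in>V. degree E v = 2 \<or> degree E v = 3)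
       \<and> (\<forall>v\<in>V. degree E v = 2 \<longrightarrow> (\<exists>t\<in>triangles V E. v \<in> t))
       \<and> (\<forall>t\<in>triangles V E. card {v \<in> t. degree E v = 2} = 1)
       \<and> (\<forall>s\<in>triangles V E. \<forall>t\<in>triangles V E. s \<noteq> t \<longrightarrow> s \<inter> t = {})"
    have "cond V E" unfolding cond_def cond_axioms_def sg_def using assms(1) h by simp
    then interpret cond V E .
    show "graph_iso (triangles E (line_graph_E V E)) (C3_E E (line_graph_E V E)) V E" by (rule iso)
  qed
qed

end
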